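(* Let $\mathcal{X}=\{x_0,x_1\}$, $\mathcal{Y}=\{0,1\}$, $\mathcal{H}=\{h_0,h_1\}$ with $h_0(x_0)=h_1(x_0)$, $h_0(x_1)=0$, $h_1(x_1)=1$. Let $\delta\in(0,1)$, $n\in\mathbb{N}$, $\epsilon=\sqrt{\log(1/\delta)/n}$ with $\epsilon<1/2$. For $\sigma\in\{0,1\}$ let $P^\sigma$ be the distribution with $P^\sigma_X(x_1)=1$, $P^\sigma(Y=\sigma\mid X=x_1)=1/2+\epsilon$, and $Q$ the distribution with $Q_X(x_1)=1$, $Q(Y=1\mid X=x_1)=1/2$. Draw $\sigma\sim\mathrm{Unif}(\{0,1\})$ and $t^*\sim\mathrm{Unif}([N])$ independently; then, independently for each $t\in[N]$, draw a dataset $Z_t$ of $n$ i.i.d. samples from $P^\sigma$ if $t=t^*$ and from $Q$ otherwise, and set $Z=(Z_1,\dots,Z_N)$. If $N\ge\delta^{-8}$, then for every learning algorithm $\mathcal{A}$ that maps $Z$ to an element of $\mathcal{H}$ (with no other input), $\mathbb{P}(\mathcal{A}(Z)\neq h_\sigma)\ge (2-\sqrt2)/4$, where $h_\sigma$ is the element of $\mathcal{H}$ with $h_\sigma(x_1)=\sigma$ (the common optimal classifier).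
   Context: The probability is over $\sigma$, $t^*$, and the samples. The target distribution is $\mathcal{D}=P^\sigma$. *)

theory Defs
  imports "HOL-Probability.Probability"
begin

datatype xpt = x0 | x1

type_synonym sample = "xpt \<times> nat"
type_synonym dataset = "nat \<Rightarrow> sample"        \<comment> \<open>samples indexed by {..<n}\<close>
type_synonym datasets = "nat \<Rightarrow> dataset"     \<comment> \<open>datasets indexed by [N] = {1..N}\<close>

definition hyp :: "nat \<Rightarrow> nat \<Rightarrow> xpt \<Rightarrow> nat" where
  "hyp c s = (\<lambda>x. if x = x1 then s else c)"

definition hclass :: "nat \<Rightarrow> (xpt \<Rightarrow> nat) set" where
  "hclass c = {hyp c 0, hyp c 1}"

definition at_x1 :: "real \<Rightarrow> sample pmf" where
  "at_x1 p = map_pmf (\<lambda>b. (x1, of_bool b)) (bernoulli_pmf p)"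

definition Psig :: "real \<Rightarrow> nat \<Rightarrow> sample pmf" where
  "Psig eps \<sigma> = at_x1 (if \<sigma> = 1 then 1/2 + eps else 1/2 - eps)"

definition Qdist :: "sample pmf" where
  "Qdist = at_x1 (1/2)"

definition iid :: "nat \<Rightarrow> sample pmf \<Rightarrow> dataset pmf" where
  "iid n D = Pi_pmf {..<n} (x1, 0) (\<lambda>_. D)"

definition joint :: "real \<Rightarrow> nat \<Rightarrow> nat \<Rightarrow> (nat \<times> datasets) pmf" where
  "joint eps n N =
     do { \<sigma> \<leftarrow> pmf_of_set {0, 1::nat};
          tstar \<leftarrow> pmf_of_set {1..N};
          Z \<leftarrow> Pi_pmf {1..N} (\<lambda>_. (x1, 0))
                 (\<lambda>t. if t = tstar then iid n (Psig eps \<sigma>) else iid n Qdist);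
          return_pmf (\<sigma>, Z) }"

end

theory Submission
  imports Defs
begin


lemma pmf_at_x1:
  assumes "0 \<le> p" "p \<le> 1"
  shows "pmf (at_x1 p) s = (if s = (x1,1) then p else if s = (x1,0) then 1 - p else 0)"
proof -
  have "pmf (at_x1 p) s = measure_pmf.prob (bernoulli_pmf p) ((\<lambda>b. (x1, of_bool b)) -` {s})"
    unfolding at_x1_def by (rule pmf_map)
  also have "\<dots> = (if s = (x1,1) then p else if s = (x1,0) then 1 - p else 0)"
  proof -
    have "(\<lambda>b. (x1, of_bool b :: nat)) -` {s} = (if s = (x1,1) then {True} else if s = (x1,0) then {False} else {})"
      by (rule set_eqI, rename_tac b, case_tac b) auto
    then show ?thesis using assms by (simp add: measure_pmf_single)
  qed
  finally show ?thesis .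
qed

lemma finite_set_at_x1: "finite (set_pmf (at_x1 p))"
  unfolding at_x1_def by simp

lemma expectation_at_x1:
  assumes "0 \<le> p" "p \<le> 1"
  shows "measure_pmf.expectation (at_x1 p) h = p * h (x1,1) + (1 - p) * h (x1,0)"
  unfolding at_x1_def using assms by simp

lemma finite_set_Pi:
  assumes "finite A" "\<And>x. x \<in> A \<Longrightarrow> finite (set_pmf (p x))"
  shows "finite (set_pmf (Pi_pmf A dflt p))"
  using assms by (simp add: set_Pi_pmf finite_PiE_dflt)

definition pp :: "real \<Rightarrow> nat \<Rightarrow> real" where
  "pp eps \<sigma> = (if \<sigma> = 1 then 1/2 + eps else 1/2 - eps)"

definition gg :: "real \<Rightarrow> nat \<Rightarrow> sample \<Rightarrow> real" where
  "gg eps \<sigma> s = 2 * pmf (Psig eps \<sigma>) s"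

definition Q1 :: "nat \<Rightarrow> dataset pmf" where "Q1 n = iid n Qdist"

definition Qall :: "nat \<Rightarrow> nat \<Rightarrow> datasets pmf" where
  "Qall n N = Pi_pmf {1..N} (\<lambda>_. (x1, 0)) (\<lambda>_. Q1 n)"

definition Mt :: "real \<Rightarrow> nat \<Rightarrow> nat \<Rightarrow> nat \<Rightarrow> nat \<Rightarrow> datasets pmf" where
  "Mt eps n N \<sigma> t = Pi_pmf {1..N} (\<lambda>_. (x1, 0))
       (\<lambda>u. if u = t then iid n (Psig eps \<sigma>) else iid n Qdist)"

definition ll :: "real \<Rightarrow> nat \<Rightarrow> nat \<Rightarrow> nat \<Rightarrow> datasets \<Rightarrow> real" where
  "ll eps n \<sigma> t z = (\<Prod>i<n. gg eps \<sigma> (z t i))"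

lemma pp_range: "0 \<le> eps \<Longrightarrow> eps < 1/2 \<Longrightarrow> 0 \<le> pp eps \<sigma> \<and> pp eps \<sigma> \<le> 1"
  unfolding pp_def by auto

lemma Psig_pp: "Psig eps \<sigma> = at_x1 (pp eps \<sigma>)"
  unfolding Psig_def pp_def by simp

lemma pmf_Q: "pmf Qdist s = (if s = (x1,1) \<or> s = (x1,0) then 1/2 else 0)"
  unfolding Qdist_def by (simp add: pmf_at_x1)

lemma pmf_Psig:
  assumes "0 \<le> eps" "eps < 1/2"
  shows "pmf (Psig eps \<sigma>) s = pmf Qdist s * gg eps \<sigma> s"
  using pp_range[OF assms, of \<sigma>]
  unfolding gg_def Psig_pp Qdist_def
  by (cases "s = (x1,1)"; cases "s = (x1,0)") (simp_all add: pmf_at_x1)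

lemma gg_nonneg: "0 \<le> gg eps \<sigma> s"
  unfolding gg_def by simp

lemma finite_Q1: "finite (set_pmf (Q1 n))"
  unfolding Q1_def iid_def Qdist_def by (rule finite_set_Pi) (auto simp: finite_set_at_x1)

lemma finite_Qall: "finite (set_pmf (Qall n N))"
  unfolding Qall_def by (rule finite_set_Pi) (auto simp: finite_Q1)

lemma finite_Mt: "finite (set_pmf (Mt eps n N \<sigma> t))"
  unfolding Mt_def iid_def Psig_def Qdist_def
  by (rule finite_set_Pi) (auto intro!: finite_set_Pi simp: finite_set_at_x1)

lemma pmf_iid:
  assumes "0 \<le> eps" "eps < 1/2"
  shows "pmf (iid n (Psig eps \<sigma>)) d = pmf (Q1 n) d * (\<Prod>i<n. gg eps \<sigma> (d i))"
  unfolding Q1_def iid_def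
  by (auto simp: pmf_Pi pmf_Psig[OF assms] prod.distrib)

lemma pmf_Mt:
  assumes "0 \<le> eps" "eps < 1/2" "t \<in> {1..N}"
  shows "pmf (Mt eps n N \<sigma> t) z = pmf (Qall n N) z * ll eps n \<sigma> t z"
proof -
  have "(\<Prod>u\<in>{1..N}. pmf (if u = t then iid n (Psig eps \<sigma>) else iid n Qdist) (z u))
      = (\<Prod>u\<in>{1..N}. pmf (Q1 n) (z u) * (if u = t then ll eps n \<sigma> t z else 1))"
    by (rule prod.cong) (auto simp: pmf_iid[OF assms(1,2)] ll_def Q1_def)
  also have "\<dots> = (\<Prod>u\<in>{1..N}. pmf (Q1 n) (z u)) * ll eps n \<sigma> t z"
    using assms(3) by (simp add: prod.distrib)
  finally have *: "(\<Prod>u\<in>{1..N}. pmf (if u = t then iid n (Psig eps \<sigma>) else iid n Qdist) (z u)) =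
    (\<Prod>u\<in>{1..N}. pmf (Q1 n) (z u)) * ll eps n \<sigma> t z" .
  show ?thesis
  proof (cases "\<forall>x. x \<notin> {1..N} \<longrightarrow> z x = (\<lambda>_. (x1,0))")
    case True
    show ?thesis unfolding Mt_def Qall_def pmf_Pi[OF finite_atLeastAtMost] if_P[OF True] by (rule *)
  next
    case False
    show ?thesis unfolding Mt_def Qall_def pmf_Pi[OF finite_atLeastAtMost] if_not_P[OF False] by simp
  qed
qed



lemma expect_Q: fixes h :: "sample \<Rightarrow> real" shows "measure_pmf.expectation Qdist h = (h (x1,1) + h (x1,0)) / 2"
  unfolding Qdist_def by (simp add: expectation_at_x1)

lemma finite_Qdist: "finite (set_pmf Qdist)"
  unfolding Qdist_def by (rule finite_set_at_x1)

lemma Egen: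
  fixes G :: "nat \<Rightarrow> sample \<Rightarrow> real"
  assumes "\<And>u s. 0 \<le> G u s"
  shows "measure_pmf.expectation (Qall n N) (\<lambda>z. \<Prod>u\<in>{1..N}. \<Prod>i<n. G u (z u i))
       = (\<Prod>u\<in>{1..N}. (measure_pmf.expectation Qdist (G u)) ^ n)"
proof -
  have "measure_pmf.expectation (Qall n N) (\<lambda>z. \<Prod>u\<in>{1..N}. \<Prod>i<n. G u (z u i))
      = (\<Prod>u\<in>{1..N}. measure_pmf.expectation (Q1 n) (\<lambda>d. \<Prod>i<n. G u (d i)))"
    unfolding Qall_def
    by (rule expectation_prod_Pi_pmf[where f = "\<lambda>u d. \<Prod>i<n. G u (d i)"])
       (auto intro!: integrable_measure_pmf_finite finite_Q1 prod_nonneg assms)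
  also have "\<dots> = (\<Prod>u\<in>{1..N}. (measure_pmf.expectation Qdist (G u)) ^ n)"
  proof (rule prod.cong[OF refl])
    fix u
    have "measure_pmf.expectation (Q1 n) (\<lambda>d. \<Prod>i<n. G u (d i))
        = (\<Prod>i<n. measure_pmf.expectation Qdist (G u))"
      unfolding Q1_def iid_def
      by (rule expectation_prod_Pi_pmf[where f = "\<lambda>i. G u"])
         (auto intro!: integrable_measure_pmf_finite finite_Qdist assms)
    then show "measure_pmf.expectation (Q1 n) (\<lambda>d. \<Prod>i<n. G u (d i)) = (measure_pmf.expectation Qdist (G u)) ^ n"
      by simp
  qed
  finally show ?thesis .
qed

lemma change_measure:
  fixes f :: "'a \<Rightarrow> real"
  assumes "finite (set_pmf Q)" "\<And>z. pmf M z = pmf Q z * w z"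
  shows "measure_pmf.expectation M f = measure_pmf.expectation Q (\<lambda>z. w z * f z)"
proof -
  have sub: "set_pmf M \<subseteq> set_pmf Q"
    using assms(2) by (auto simp: set_pmf_iff)
  have "measure_pmf.expectation M f = (\<Sum>a\<in>set_pmf Q. pmf M a * f a)"
    by (subst integral_measure_pmf[OF assms(1)]) (use sub in auto)
  also have "\<dots> = (\<Sum>a\<in>set_pmf Q. pmf Q a * (w a * f a))"
    by (simp add: assms(2) mult.assoc)
  also have "\<dots> = measure_pmf.expectation Q (\<lambda>z. w z * f z)"
    by (subst integral_measure_pmf[OF assms(1)]) auto
  finally show ?thesis .
qed

lemma expect_sum:
  fixes f :: "'a \<Rightarrow> real"
  assumes "finite (set_pmf Q)"
  shows "measure_pmf.expectation Q f = (\<Sum>a\<in>set_pmf Q. pmf Q a * f a)"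
  by (subst integral_measure_pmf[OF assms(1)]) auto

lemma cs_pmf:
  fixes f g :: "'a \<Rightarrow> real"
  assumes "finite (set_pmf q)"
  shows "(measure_pmf.expectation q (\<lambda>z. f z * g z))\<^sup>2
      \<le> measure_pmf.expectation q (\<lambda>z. (f z)\<^sup>2) * measure_pmf.expectation q (\<lambda>z. (g z)\<^sup>2)"
proof -
  let ?F = "set_pmf q"
  have "(\<Sum>a\<in>?F. (sqrt (pmf q a) * f a) * (sqrt (pmf q a) * g a))\<^sup>2
     \<le> (\<Sum>a\<in>?F. (sqrt (pmf q a) * f a)\<^sup>2) * (\<Sum>a\<in>?F. (sqrt (pmf q a) * g a)\<^sup>2)"
    by (rule Cauchy_Schwarz_ineq_sum)
  moreover have "\<And>a. (sqrt (pmf q a) * f a) * (sqrt (pmf q a) * g a) = pmf q a * (f a * g a)"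
    by (simp add: algebra_simps)
  moreover have "\<And>a h. (sqrt (pmf q a) * h)\<^sup>2 = pmf q a * h\<^sup>2"
    by (simp add: power_mult_distrib)
  ultimately show ?thesis by (simp add: expect_sum[OF assms])
qed

lemma gg_val1:
  assumes "0 \<le> eps" "eps < 1/2"
  shows "gg eps \<sigma> (x1,1) = 2 * pp eps \<sigma>"
  using pp_range[OF assms, of \<sigma>] apply (simp add: gg_def Psig_pp) apply (simp add: pmf_at_x1) done

lemma gg_val0:
  assumes "0 \<le> eps" "eps < 1/2"
  shows "gg eps \<sigma> (x1,0) = 2 * (1 - pp eps \<sigma>)"
  using pp_range[OF assms, of \<sigma>] apply (simp add: gg_def Psig_pp) apply (simp add: pmf_at_x1) done

lemma gg_val1':
  assumes "0 \<le> eps" "eps < 1/2"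
  shows "gg eps \<sigma> (x1, Suc 0) = 2 * pp eps \<sigma>"
  using gg_val1[OF assms] by (simp only: One_nat_def)

lemmas gg_vals = gg_val1 gg_val0 gg_val1' 

lemma E_gg:
  assumes "0 \<le> eps" "eps < 1/2"
  shows "measure_pmf.expectation Qdist (gg eps \<sigma>) = 1"
  by (simp add: expect_Q gg_vals[OF assms])

definition CC :: "real \<Rightarrow> nat \<Rightarrow> nat \<Rightarrow> real" where
  "CC eps a b = 2 * (pp eps a * pp eps b + (1 - pp eps a) * (1 - pp eps b))"

lemma E_gg2:
  assumes "0 \<le> eps" "eps < 1/2"
  shows "measure_pmf.expectation Qdist (\<lambda>s. gg eps a s * gg eps b s) = CC eps a b"
  by (simp add: expect_Q gg_vals[OF assms] CC_def field_simps)

lemma E_G: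
  assumes "0 \<le> eps" "eps < 1/2"
  shows "measure_pmf.expectation Qdist (\<lambda>s. (if P then gg eps a s else 1) * (if R then gg eps b s else 1))
     = (if P \<and> R then CC eps a b else 1)"
  by (cases P; cases R) (simp_all add: expect_Q gg_vals[OF assms] CC_def field_simps)

lemma E_ll:
  assumes "0 \<le> eps" "eps < 1/2" "t \<in> {1..N}"
  shows "measure_pmf.expectation (Qall n N) (ll eps n a t) = 1"
proof -
  define G where "G = (\<lambda>u s. if u = t then gg eps a s else 1)"
  have "ll eps n a t z = (\<Prod>u\<in>{1..N}. \<Prod>i<n. G u (z u i))" for z
  proof -
    have "(\<Prod>u\<in>{1..N}. \<Prod>i<n. G u (z u i)) = (\<Prod>u\<in>{1..N}. if u = t then ll eps n a t z else 1)"
      by (rule prod.cong) (auto simp: G_def ll_def)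
    also have "\<dots> = ll eps n a t z" using assms(3) by (simp add: prod.delta)
    finally show ?thesis by simp
  qed
  then have "measure_pmf.expectation (Qall n N) (ll eps n a t)
      = measure_pmf.expectation (Qall n N) (\<lambda>z. \<Prod>u\<in>{1..N}. \<Prod>i<n. G u (z u i))"
    by presburger
  also have "\<dots> = (\<Prod>u\<in>{1..N}. (measure_pmf.expectation Qdist (G u)) ^ n)"
    by (rule Egen) (simp add: G_def gg_nonneg)
  also have "\<dots> = 1"
  proof (rule prod.neutral, rule ballI)
    fix u
    show "(measure_pmf.expectation Qdist (G u)) ^ n = 1"
      by (cases "u = t") (simp_all add: G_def expect_Q gg_vals[OF assms(1,2)])
  qed
  finally show ?thesis .
qed

lemma E_ll2:
  assumes "0 \<le> eps" "eps < 1/2" "t \<in> {1..N}" "t' \<in> {1..N}"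
  shows "measure_pmf.expectation (Qall n N) (\<lambda>z. ll eps n a t z * ll eps n b t' z)
       = (if t = t' then (CC eps a b) ^ n else 1)"
proof -
  define G where "G = (\<lambda>u s. (if u = t then gg eps a s else 1) * (if u = t' then gg eps b s else 1))"
  have "ll eps n a t z * ll eps n b t' z = (\<Prod>u\<in>{1..N}. \<Prod>i<n. G u (z u i))" for z
  proof -
    have "(\<Prod>u\<in>{1..N}. \<Prod>i<n. G u (z u i))
        = (\<Prod>u\<in>{1..N}. (if u = t then ll eps n a t z else 1) * (if u = t' then ll eps n b t' z else 1))"
      by (rule prod.cong) (auto simp: G_def ll_def prod.distrib)
    also have "\<dots> = ll eps n a t z * ll eps n b t' z" using assms(3,4) by (simp add: prod.distrib prod.delta)
    finally show ?thesis by simp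
  qed
  then have "measure_pmf.expectation (Qall n N) (\<lambda>z. ll eps n a t z * ll eps n b t' z)
      = measure_pmf.expectation (Qall n N) (\<lambda>z. \<Prod>u\<in>{1..N}. \<Prod>i<n. G u (z u i))"
    by presburger
  also have "\<dots> = (\<Prod>u\<in>{1..N}. (measure_pmf.expectation Qdist (G u)) ^ n)"
    by (rule Egen) (simp add: G_def gg_nonneg)
  also have "\<dots> = (\<Prod>u\<in>{1..N}. (if u = t \<and> u = t' then CC eps a b else 1) ^ n)"
  proof (rule prod.cong[OF refl])
    fix u
    show "(measure_pmf.expectation Qdist (G u)) ^ n = (if u = t \<and> u = t' then CC eps a b else 1) ^ n"
      using E_G[OF assms(1,2), of "u = t" a "u = t'" b] by (simp add: G_def)
  qed
  also have "\<dots> = (if t = t' then (CC eps a b) ^ n else 1)"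
  proof (cases "t = t'")
    case True
    then show ?thesis using assms(3) by (simp add: prod.delta if_distrib[where f="\<lambda>x. x ^ n"] cong: if_cong)
  next
    case False
    then show ?thesis by (simp add: prod.neutral)
  qed
  finally show ?thesis .
qed



definition Ssum :: "'a pmf \<Rightarrow> ('a \<Rightarrow> real) \<Rightarrow> real" where
  "Ssum q f = (\<Sum>z\<in>set_pmf q. pmf q z * f z)"

lemma Ssum_add: "Ssum q (\<lambda>z. f z + g z) = Ssum q f + Ssum q g"
  unfolding Ssum_def by (simp add: algebra_simps sum.distrib)
lemma Ssum_diff: "Ssum q (\<lambda>z. f z - g z) = Ssum q f - Ssum q g"
  unfolding Ssum_def by (simp add: algebra_simps sum_subtractf)
lemma Ssum_cmult: "Ssum q (\<lambda>z. c * f z) = c * Ssum q f"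
  unfolding Ssum_def by (simp add: algebra_simps sum_distrib_left)
lemma Ssum_divide: "Ssum q (\<lambda>z. f z / c) = Ssum q f / c"
  unfolding Ssum_def by (simp add: sum_divide_distrib)
lemma Ssum_sum: "Ssum q (\<lambda>z. \<Sum>t\<in>T. f t z) = (\<Sum>t\<in>T. Ssum q (f t))"
  unfolding Ssum_def by (simp add: sum_distrib_left sum.swap[of _ T])
lemma Ssum_const: "finite (set_pmf q) \<Longrightarrow> Ssum q (\<lambda>z. c) = c"
  unfolding Ssum_def by (simp add: sum_distrib_right[symmetric] sum_pmf_eq_1)
lemma Ssum_cong: "(\<And>z. f z = g z) \<Longrightarrow> Ssum q f = Ssum q g"
  by presburger
lemma Ssum_expect: "finite (set_pmf q) \<Longrightarrow> measure_pmf.expectation q f = Ssum q f"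
  unfolding Ssum_def by (rule expect_sum)



lemma joint_alt: "joint eps n N = pmf_of_set {0,1} \<bind> (\<lambda>\<sigma>. pmf_of_set {1..N} \<bind> (\<lambda>t. map_pmf (Pair \<sigma>) (Mt eps n N \<sigma> t)))"
  by (simp add: joint_def Mt_def map_pmf_def)

lemma E_bind_set:
  fixes h :: "'b \<Rightarrow> real"
  assumes "finite A" "A \<noteq> {}" "\<And>a. a \<in> A \<Longrightarrow> finite (set_pmf (f a))"
  shows "measure_pmf.expectation (pmf_of_set A \<bind> f) h = (\<Sum>a\<in>A. measure_pmf.expectation (f a) h) / real (card A)"
  using pmf_expectation_bind_pmf_of_set[of A f h] assms by (simp add: sum_distrib_left[symmetric] divide_inverse mult.commute)

lemma alpha_bound:
  fixes \<delta> \<epsilon> :: real and n N :: nat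
  assumes "0 < \<delta>" and "\<delta> < 1"
    and "\<epsilon> = sqrt (ln (1 / \<delta>) / real n)"
    and "real N \<ge> (1 / \<delta>) ^ 8"
  shows "(1 + 4 * \<epsilon>\<^sup>2) ^ n \<le> real N"
proof -
  have d1: "1 \<le> 1 / \<delta>" using assms(1,2) by simp
  have "(1 + 4 * \<epsilon>\<^sup>2) ^ n \<le> (1 / \<delta>) ^ 4"
  proof (cases "n = 0")
    case True
    then show ?thesis using d1 by simp
  next
    case False
    have lpos: "0 < ln (1 / \<delta>)" using assms(1,2) by simp
    have e2: "\<epsilon>\<^sup>2 = ln (1 / \<delta>) / real n"
      using assms(3) lpos by simp
    have "(1 + 4 * \<epsilon>\<^sup>2) ^ n \<le> (exp (4 * \<epsilon>\<^sup>2)) ^ n"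
      by (rule power_mono) (auto intro: exp_ge_add_one_self)
    also have "\<dots> = exp (real n * (4 * \<epsilon>\<^sup>2))"
      by (simp add: exp_of_nat_mult)
    also have "real n * (4 * \<epsilon>\<^sup>2) = real 4 * ln (1 / \<delta>)"
      using False by (simp add: e2)
    also have "exp (real 4 * ln (1 / \<delta>)) = (1 / \<delta>) ^ 4"
      by (subst exp_of_nat_mult) (use assms(1) in simp)
    finally show ?thesis .
  qed
  also have "\<dots> \<le> (1 / \<delta>) ^ 8"
    by (rule power_increasing) (use d1 in auto)
  also have "\<dots> \<le> real N" by (rule assms(4))
  finally show ?thesis .
qed



theorem theorem4p2:
  fixes \<delta> \<epsilon> :: real and n N c :: nat
    and A :: "datasets \<Rightarrow> (xpt \<Rightarrow> nat)"
  assumes "c \<in> {0, 1}"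
    and "0 < \<delta>" and "\<delta> < 1"
    and "\<epsilon> = sqrt (ln (1 / \<delta>) / real n)"
    and "\<epsilon> < 1/2"
    and "real N \<ge> (1 / \<delta>) ^ 8"
    and "\<forall>Z. A Z \<in> hclass c"
  shows "measure_pmf.prob (joint \<epsilon> n N) {(\<sigma>, Z). A Z \<noteq> hyp c \<sigma>} \<ge> (2 - sqrt 2) / 4"
proof -
  have d1: "1 \<le> 1 / \<delta>" using assms(2,3) by simp
  have "0 \<le> ln (1 / \<delta>)" using d1 by simp
  then have e0: "0 \<le> \<epsilon>" using assms(4) by simp
  have "1 \<le> (1 / \<delta>) ^ 8" using d1 by (simp add: one_le_power)
  then have N1: "1 \<le> N" using assms(6) by linarith
  then have Npos: "0 < real N" by simp
  define T where "T = {1..N}"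
  have Tne: "T \<noteq> {}" "finite T" using N1 by (auto simp: T_def)
  have cardT: "card T = N" by (simp add: T_def)
  define q where "q = Qall n N"
  have fq: "finite (set_pmf q)" unfolding q_def by (rule finite_Qall)
  define ind where "ind Z = (if A Z = hyp c 1 then 0 else 1::real)" for Z
  define Err where "Err = {(\<sigma>, Z). A Z \<noteq> hyp c \<sigma>}"
  have hne: "hyp c 0 \<noteq> hyp c 1" by (auto simp: hyp_def fun_eq_iff)
  have ind0: "indicator Err (0::nat, Z) = 1 - ind Z" for Z
  proof -
    have "A Z = hyp c 0 \<or> A Z = hyp c 1" using assms(7) by (auto simp: hclass_def)
    then show ?thesis using hne by (auto simp: Err_def ind_def indicator_def)
  qed
  have ind1: "indicator Err (1::nat, Z) = ind Z" for Z
    by (simp add: Err_def ind_def indicator_def)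
  have ind1': "indicator Err (Suc 0, Z) = ind Z" for Z
    by (simp add: Err_def ind_def indicator_def)
  define ll0 where "ll0 t z = ll \<epsilon> n 0 t z" for t z
  define ll1 where "ll1 t z = ll \<epsilon> n 1 t z" for t z

  have finM: "finite (set_pmf (map_pmf (Pair \<sigma>) (Mt \<epsilon> n N \<sigma> t)))" for \<sigma> t
    by (simp add: finite_Mt)
  have fin_inner: "finite (set_pmf (pmf_of_set T \<bind> (\<lambda>t. map_pmf (Pair \<sigma>) (Mt \<epsilon> n N \<sigma> t))))" for \<sigma>
    using Tne by (simp add: set_pmf_of_set finite_Mt)
  have Ejoint: "measure_pmf.expectation (joint \<epsilon> n N) h
     = (\<Sum>\<sigma>\<in>{0,1::nat}. (\<Sum>t\<in>T. measure_pmf.expectation (Mt \<epsilon> n N \<sigma> t) (\<lambda>Z. h (\<sigma>, Z))) / real N) / 2"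
    for h :: "nat \<times> datasets \<Rightarrow> real"
  proof -
    have "measure_pmf.expectation (joint \<epsilon> n N) h
       = (\<Sum>\<sigma>\<in>{0,1::nat}. measure_pmf.expectation (pmf_of_set T \<bind> (\<lambda>t. map_pmf (Pair \<sigma>) (Mt \<epsilon> n N \<sigma> t))) h) / 2"
      unfolding joint_alt T_def[symmetric]
      by (subst E_bind_set) (simp, simp, rule fin_inner, simp)
    also have "\<dots> = (\<Sum>\<sigma>\<in>{0,1::nat}. (\<Sum>t\<in>T. measure_pmf.expectation (Mt \<epsilon> n N \<sigma> t) (\<lambda>Z. h (\<sigma>, Z))) / real N) / 2"
      by (subst E_bind_set[OF Tne(2,1) finM]) (simp add: cardT)
    finally show ?thesis .
  qed
  have "measure_pmf.prob (joint \<epsilon> n N) Err = measure_pmf.expectation (joint \<epsilon> n N) (indicator Err)"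
    by simp
  also have "\<dots> = (\<Sum>\<sigma>\<in>{0,1::nat}. (\<Sum>t\<in>T. measure_pmf.expectation (Mt \<epsilon> n N \<sigma> t) (\<lambda>Z. indicator Err (\<sigma>, Z))) / real N) / 2"
    by (rule Ejoint)
  also have "\<dots> = ((\<Sum>t\<in>T. measure_pmf.expectation (Mt \<epsilon> n N 0 t) (\<lambda>Z. 1 - ind Z)) / real N
       + (\<Sum>t\<in>T. measure_pmf.expectation (Mt \<epsilon> n N 1 t) ind) / real N) / 2"
    by (simp add: ind0 ind1 ind1')
  also have "\<dots> = ((\<Sum>t\<in>T. Ssum q (\<lambda>z. ll0 t z * (1 - ind z))) / real N
                  + (\<Sum>t\<in>T. Ssum q (\<lambda>z. ll1 t z * ind z)) / real N) / 2"
  proof -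
    have cm: "measure_pmf.expectation (Mt \<epsilon> n N \<sigma> t) f = Ssum q (\<lambda>z. ll \<epsilon> n \<sigma> t z * f z)"
      if "t \<in> T" for \<sigma> t f
      using change_measure[OF finite_Qall pmf_Mt[OF e0 assms(5)], of t N n \<sigma> f] that
      by (simp add: T_def Ssum_expect[OF finite_Qall] q_def)
    show ?thesis
      by (simp add: cm ll0_def ll1_def cong: sum.cong)
  qed
  finally have step1: "measure_pmf.prob (joint \<epsilon> n N) Err = ((\<Sum>t\<in>T. Ssum q (\<lambda>z. ll0 t z * (1 - ind z))) / real N
                  + (\<Sum>t\<in>T. Ssum q (\<lambda>z. ll1 t z * ind z)) / real N) / 2" .
  have S1: "Ssum q (ll \<epsilon> n \<sigma> t) = 1" if "t \<in> T" for \<sigma> t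
    using E_ll[OF e0 assms(5), of t N n \<sigma>] that by (simp add: T_def q_def Ssum_expect[OF finite_Qall])
  have S2: "Ssum q (\<lambda>z. ll \<epsilon> n a t z * ll \<epsilon> n b t' z) = (if t = t' then CC \<epsilon> a b ^ n else 1)"
    if "t \<in> T" "t' \<in> T" for a b t t'
    using E_ll2[OF e0 assms(5), of t N t' n a b] that by (simp add: T_def q_def Ssum_expect[OF finite_Qall])
  define a where "a t = Ssum q (\<lambda>z. ll0 t z * ind z)" for t
  define b where "b t = Ssum q (\<lambda>z. ll1 t z * ind z)" for t
  define D where "D z = (\<Sum>t\<in>T. ll0 t z - ll1 t z) / real N" for z
  have SDind: "Ssum q (\<lambda>z. D z * ind z) = (\<Sum>t\<in>T. a t - b t) / real N"
  proof -
    have "Ssum q (\<lambda>z. D z * ind z) = Ssum q (\<lambda>z. (\<Sum>t\<in>T. ll0 t z * ind z - ll1 t z * ind z) / real N)"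
      by (rule Ssum_cong) (simp add: D_def sum_distrib_right left_diff_distrib)
    also have "\<dots> = (\<Sum>t\<in>T. a t - b t) / real N"
      by (simp add: Ssum_divide Ssum_sum Ssum_diff a_def b_def)
    finally show ?thesis .
  qed
  have Sa: "Ssum q (\<lambda>z. ll0 t z * (1 - ind z)) = 1 - a t" if "t \<in> T" for t
  proof -
    have "Ssum q (\<lambda>z. ll0 t z * (1 - ind z)) = Ssum q (\<lambda>z. ll0 t z - ll0 t z * ind z)"
      by (rule Ssum_cong) (simp add: right_diff_distrib)
    also have "\<dots> = 1 - a t"
      using S1[OF that, of 0] by (simp add: Ssum_diff a_def ll0_def)
    finally show ?thesis .
  qed
  have key: "measure_pmf.prob (joint \<epsilon> n N) Err = (1 - Ssum q (\<lambda>z. D z * ind z)) / 2"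
  proof -
    have "(\<Sum>t\<in>T. Ssum q (\<lambda>z. ll0 t z * (1 - ind z))) = (\<Sum>t\<in>T. 1 - a t)"
      by (rule sum.cong) (simp_all add: Sa)
    also have "\<dots> = real N - (\<Sum>t\<in>T. a t)"
      by (simp add: sum_subtractf cardT)
    finally have h1: "(\<Sum>t\<in>T. Ssum q (\<lambda>z. ll0 t z * (1 - ind z))) = real N - (\<Sum>t\<in>T. a t)" .
    have h2: "(\<Sum>t\<in>T. Ssum q (\<lambda>z. ll1 t z * ind z)) = (\<Sum>t\<in>T. b t)"
      by (simp add: b_def)
    show ?thesis
      unfolding step1 h1 h2 SDind using Npos
      by (simp add: sum_subtractf field_simps)
  qed
  have ED0: "Ssum q D = 0"
  proof -
    have "Ssum q D = Ssum q (\<lambda>z. (\<Sum>t\<in>T. ll0 t z - ll1 t z) / real N)"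
      by (rule Ssum_cong) (simp add: D_def)
    also have "\<dots> = (\<Sum>t\<in>T. Ssum q (ll0 t) - Ssum q (ll1 t)) / real N"
      by (simp add: Ssum_divide Ssum_sum Ssum_diff)
    also have "\<dots> = 0"
    proof -
      have "ll0 t = ll \<epsilon> n 0 t" "ll1 t = ll \<epsilon> n 1 t" for t
        by (auto simp: ll0_def ll1_def)
      then show ?thesis using S1 by simp
    qed
    finally show ?thesis .
  qed
  have Sh: "Ssum q (\<lambda>z. D z * ind z) = Ssum q (\<lambda>z. D z * (ind z - 1/2))"
  proof -
    have "Ssum q (\<lambda>z. D z * (ind z - 1/2)) = Ssum q (\<lambda>z. D z * ind z - D z / 2)"
      by (rule Ssum_cong) (simp add: algebra_simps)
    also have "\<dots> = Ssum q (\<lambda>z. D z * ind z)"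
      by (simp add: Ssum_diff Ssum_divide ED0)
    finally show ?thesis by simp
  qed
  have CS: "(Ssum q (\<lambda>z. D z * (ind z - 1/2)))\<^sup>2 \<le> Ssum q (\<lambda>z. (D z)\<^sup>2) * Ssum q (\<lambda>z. (ind z - 1/2)\<^sup>2)"
    using cs_pmf[OF fq, of D "\<lambda>z. ind z - 1/2"] by (simp add: Ssum_expect[OF fq])
  have Sh2: "Ssum q (\<lambda>z. (ind z - 1/2)\<^sup>2) = 1/4"
  proof -
    have "Ssum q (\<lambda>z. (ind z - 1/2)\<^sup>2) = Ssum q (\<lambda>z. 1/4)"
      by (rule Ssum_cong) (simp add: ind_def power2_eq_square)
    then show ?thesis by (simp add: Ssum_const[OF fq])
  qed
  define K where "K = CC \<epsilon> 0 0 ^ n + CC \<epsilon> 1 1 ^ n - CC \<epsilon> 0 1 ^ n - CC \<epsilon> 1 0 ^ n"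
  have SD2: "Ssum q (\<lambda>z. (D z)\<^sup>2) = K / real N"
  proof -
    have pt: "(D z)\<^sup>2 = (\<Sum>t\<in>T. \<Sum>t'\<in>T.
        (ll0 t z * ll0 t' z + ll1 t z * ll1 t' z) - (ll0 t z * ll1 t' z + ll1 t z * ll0 t' z)) / (real N)\<^sup>2" for z
    proof -
      have "(D z)\<^sup>2 = ((\<Sum>t\<in>T. ll0 t z - ll1 t z) * (\<Sum>t'\<in>T. ll0 t' z - ll1 t' z)) / (real N)\<^sup>2"
        by (simp add: D_def power2_eq_square)
      also have "(\<Sum>t\<in>T. ll0 t z - ll1 t z) * (\<Sum>t'\<in>T. ll0 t' z - ll1 t' z)
          = (\<Sum>t\<in>T. \<Sum>t'\<in>T. (ll0 t z - ll1 t z) * (ll0 t' z - ll1 t' z))"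
        by (rule sum_product)
      also have "\<dots> = (\<Sum>t\<in>T. \<Sum>t'\<in>T.
        (ll0 t z * ll0 t' z + ll1 t z * ll1 t' z) - (ll0 t z * ll1 t' z + ll1 t z * ll0 t' z))"
        by (simp add: algebra_simps)
      finally show ?thesis .
    qed
    have "Ssum q (\<lambda>z. (D z)\<^sup>2) = (\<Sum>t\<in>T. \<Sum>t'\<in>T.
        (Ssum q (\<lambda>z. ll0 t z * ll0 t' z) + Ssum q (\<lambda>z. ll1 t z * ll1 t' z))
        - (Ssum q (\<lambda>z. ll0 t z * ll1 t' z) + Ssum q (\<lambda>z. ll1 t z * ll0 t' z))) / (real N)\<^sup>2"
      by (simp only: pt Ssum_divide Ssum_sum Ssum_diff Ssum_add)
    also have "\<dots> = (\<Sum>t\<in>T. \<Sum>t'\<in>T. (if t = t' then K else 0)) / (real N)\<^sup>2"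
      by (intro arg_cong2[where f="(/)"] sum.cong refl) (simp add: ll0_def ll1_def S2 K_def)
    also have "\<dots> = (\<Sum>t\<in>T. K) / (real N)\<^sup>2"
      using Tne(2) by simp
    also have "\<dots> = K / real N"
      using Npos by (simp add: cardT power2_eq_square)
    finally show ?thesis .
  qed
  have CCv: "CC \<epsilon> 0 0 = 1 + 4 * \<epsilon>\<^sup>2" "CC \<epsilon> 1 1 = 1 + 4 * \<epsilon>\<^sup>2"
            "CC \<epsilon> 0 1 = 1 - 4 * \<epsilon>\<^sup>2" "CC \<epsilon> 1 0 = 1 - 4 * \<epsilon>\<^sup>2"
    by (simp_all add: CC_def pp_def power2_eq_square algebra_simps)
  have beta: "0 \<le> 1 - 4 * \<epsilon>\<^sup>2"
  proof -
    have "\<epsilon>\<^sup>2 \<le> (1/2)\<^sup>2" using e0 assms(5) by (intro power_mono) auto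
    then show ?thesis by (simp add: power2_eq_square)
  qed
  have "K \<le> 2 * (1 + 4 * \<epsilon>\<^sup>2) ^ n"
    using zero_le_power[OF beta, of n] unfolding K_def CCv by simp
  also have "\<dots> \<le> 2 * real N"
    using alpha_bound[OF assms(2,3,4,6)] by simp
  finally have "K \<le> 2 * real N" .
  then have SD2b: "Ssum q (\<lambda>z. (D z)\<^sup>2) \<le> 2"
    using Npos by (simp add: SD2 divide_le_eq)
  have "(Ssum q (\<lambda>z. D z * ind z))\<^sup>2 \<le> 1/2"
  proof -
    have "(Ssum q (\<lambda>z. D z * ind z))\<^sup>2 \<le> Ssum q (\<lambda>z. (D z)\<^sup>2) * (1/4)"
      using CS by (simp add: Sh Sh2)
    also have "\<dots> \<le> 2 * (1/4)" using SD2b by simp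
    finally show ?thesis by simp
  qed
  also have "(1/2::real) = (sqrt 2 / 2)\<^sup>2" by (simp add: power_divide)
  finally have "Ssum q (\<lambda>z. D z * ind z) \<le> sqrt 2 / 2"
    by (rule power2_le_imp_le) simp
  then have "(2 - sqrt 2) / 4 \<le> (1 - Ssum q (\<lambda>z. D z * ind z)) / 2"
    by simp
  then show ?thesis using key by (simp add: Err_def)
qed

end
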